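(* Let $\Omega\subset\mathbb{R}^d$ be a bounded Lipschitz domain, $\Gamma_D\subset\partial\Omega$ of positive surface measure, $\ell\ge1$, and let $(\cdot,\cdot)_\star$ be an inner product on $H^1_D(\Omega;\mathbb{R}^\ell)$ with induced norm $\|\cdot\|_\star$ satisfying $\|v\|\le c_\star^{1/2}\|v\|_\star$ for all $v\in H^1_D(\Omega;\mathbb{R}^\ell)$. Let $\tau>0$ and $u^0\in H^1(\Omega;\mathbb{R}^\ell)$ with $|u^0|^2=1$ a.e. in $\Omega$. Let $d_t u^1\in H^1_D(\Omega;\mathbb{R}^\ell)$ satisfy $d_t u^1\cdot u^0 = 0$ a.e. and \[ (d_t u^1, v)_\star + (\nabla[u^0+\tau d_t u^1],\nabla v) = 0 \] for all $v\in H^1_D(\Omega;\mathbb{R}^\ell)$ with $v\cdot u^0=0$ a.e., and set $u^1 = u^0+\tau d_t u^1$. Then, with a constant $c_G>0$ independent of $\tau$ and $u^0$: (a) $\|\nabla\mathcal U^1\|_G^2 \le c_G\|\nabla u^0\|^2$ and $\tau\|d_t u^1\|_\star^2\le \frac12\|\nabla u^0\|^2$; (b) $\big\||u^1|^2-1\big\|_{L^1} = \tau^2\|d_t u^1\|^2$.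
   Context: $H^1_D(\Omega;\mathbb{R}^\ell)$ is the space of $H^1$ vector fields whose traces vanish on $\Gamma_D$; $\|\cdot\|$ and $(\cdot,\cdot)$ denote the $L^2$ norm and inner product, $|\cdot|$ the Euclidean norm. $\mathcal U^1 = (u^1,u^0)$, and for a pair $(x,y)$ of functions, $\|\nabla(x,y)\|_G^2 = \frac54\|\nabla x\|^2 - (\nabla x,\nabla y) + \frac14\|\nabla y\|^2$ (i.e. the $L^2$-integrated version of $|(a,b)|_G^2 = \frac54|a|^2 - a\cdot b + \frac14|b|^2$). *)

theory Defs
  imports "HOL-Analysis.Analysis"
begin

definition lipschitz_domain :: "'a::euclidean_space set \<Rightarrow> bool" where
  "lipschitz_domain \<Omega> \<longleftrightarrow> open \<Omega> \<and> connected \<Omega> \<and> \<Omega> \<noteq> {} \<and>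
     (\<forall>x\<in>frontier \<Omega>. \<exists>r>0. \<exists>e. norm e = 1 \<and> (\<exists>g L. L-lipschitz_on UNIV g \<and>
        \<Omega> \<inter> ball x r = {y \<in> ball x r. y \<bullet> e < g (y - (y \<bullet> e) *\<^sub>R e)}))"

text \<open>Unnormalised s-dimensional Hausdorff measure (normalisation irrelevant for positivity).\<close>
definition hausdorff_pre :: "nat \<Rightarrow> real \<Rightarrow> 'a::metric_space set \<Rightarrow> ennreal" where
  "hausdorff_pre s \<delta> A =
     (INF C \<in> {C :: nat \<Rightarrow> 'a set. A \<subseteq> (\<Union>i. C i) \<and> (\<forall>i. bounded (C i) \<and> diameter (C i) \<le> \<delta>)}.
        (\<Sum>i. ennreal (if C i = {} then 0 else diameter (C i) ^ s)))"

definition hausdorff_measure :: "nat \<Rightarrow> 'a::metric_space set \<Rightarrow> ennreal" where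
  "hausdorff_measure s A = (SUP \<delta>\<in>{0<..}. hausdorff_pre s \<delta> A)"

definition surface_measure :: "'a::euclidean_space set \<Rightarrow> ennreal" where
  "surface_measure A = hausdorff_measure (DIM('a) - 1) A"

definition L2 :: "'a::euclidean_space set \<Rightarrow> ('a \<Rightarrow> 'b::euclidean_space) \<Rightarrow> bool" where
  "L2 \<Omega> f \<longleftrightarrow> f \<in> borel_measurable (lebesgue_on \<Omega>) \<and>
     integrable (lebesgue_on \<Omega>) (\<lambda>x. (norm (f x))\<^sup>2)"

definition l2inner :: "'a::euclidean_space set \<Rightarrow> ('a \<Rightarrow> 'b::euclidean_space) \<Rightarrow> ('a \<Rightarrow> 'b) \<Rightarrow> real" where
  "l2inner \<Omega> f g = integral\<^sup>L (lebesgue_on \<Omega>) (\<lambda>x. f x \<bullet> g x)"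

definition l2norm :: "'a::euclidean_space set \<Rightarrow> ('a \<Rightarrow> 'b::euclidean_space) \<Rightarrow> real" where
  "l2norm \<Omega> f = sqrt (l2inner \<Omega> f f)"

definition C1_with :: "('a::euclidean_space \<Rightarrow> 'b::real_normed_vector) \<Rightarrow> ('a \<Rightarrow> 'a \<Rightarrow> 'b) \<Rightarrow> bool" where
  "C1_with \<phi> D \<longleftrightarrow> (\<forall>x. (\<phi> has_derivative D x) (at x)) \<and> (\<forall>v. continuous_on UNIV (\<lambda>x. D x v))"

definition tsupp :: "('a::euclidean_space \<Rightarrow> 'b::real_normed_vector) \<Rightarrow> 'a set" where
  "tsupp \<phi> = closure {x. \<phi> x \<noteq> 0}"

definition weak_partial :: "'a::euclidean_space set \<Rightarrow> ('a \<Rightarrow> 'b::euclidean_space) \<Rightarrow> 'a \<Rightarrow> ('a \<Rightarrow> 'b) \<Rightarrow> bool" where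
  "weak_partial \<Omega> u b g \<longleftrightarrow>
     (\<forall>(\<phi>::'a \<Rightarrow> real) D. C1_with \<phi> D \<and> compact (tsupp \<phi>) \<and> tsupp \<phi> \<subseteq> \<Omega> \<longrightarrow>
        integral\<^sup>L (lebesgue_on \<Omega>) (\<lambda>x. D x b *\<^sub>R u x) = - integral\<^sup>L (lebesgue_on \<Omega>) (\<lambda>x. \<phi> x *\<^sub>R g x))"

definition H1 :: "'a::euclidean_space set \<Rightarrow> ('a \<Rightarrow> 'b::euclidean_space) \<Rightarrow> bool" where
  "H1 \<Omega> u \<longleftrightarrow> L2 \<Omega> u \<and> (\<forall>b\<in>Basis. \<exists>g. L2 \<Omega> g \<and> weak_partial \<Omega> u b g)"

text \<open>A (the, up to a.e. equality) weak partial derivative.\<close>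
definition wgrad :: "'a::euclidean_space set \<Rightarrow> ('a \<Rightarrow> 'b::euclidean_space) \<Rightarrow> 'a \<Rightarrow> ('a \<Rightarrow> 'b)" where
  "wgrad \<Omega> u b = (SOME g. L2 \<Omega> g \<and> weak_partial \<Omega> u b g)"

definition gradinner :: "'a::euclidean_space set \<Rightarrow> ('a \<Rightarrow> 'b::euclidean_space) \<Rightarrow> ('a \<Rightarrow> 'b) \<Rightarrow> real" where
  "gradinner \<Omega> u v = (\<Sum>b\<in>Basis. l2inner \<Omega> (wgrad \<Omega> u b) (wgrad \<Omega> v b))"

definition gradnorm2 :: "'a::euclidean_space set \<Rightarrow> ('a \<Rightarrow> 'b::euclidean_space) \<Rightarrow> real" where
  "gradnorm2 \<Omega> u = gradinner \<Omega> u u"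

definition h1norm :: "'a::euclidean_space set \<Rightarrow> ('a \<Rightarrow> 'b::euclidean_space) \<Rightarrow> real" where
  "h1norm \<Omega> u = sqrt ((l2norm \<Omega> u)\<^sup>2 + gradnorm2 \<Omega> u)"

definition CD :: "'a::euclidean_space set \<Rightarrow> ('a \<Rightarrow> 'b::euclidean_space) set" where
  "CD \<Gamma> = {\<phi>. (\<exists>D. C1_with \<phi> D) \<and> compact (tsupp \<phi>) \<and> tsupp \<phi> \<inter> closure \<Gamma> = {}}"

text \<open>H^1_D: H^1-closure of CD (functions with vanishing trace on Gamma_D).\<close>
definition H1D :: "'a::euclidean_space set \<Rightarrow> 'a set \<Rightarrow> ('a \<Rightarrow> 'b::euclidean_space) set" where
  "H1D \<Omega> \<Gamma> = {u. H1 \<Omega> u \<and> (\<exists>f. (\<forall>n. f n \<in> CD \<Gamma>) \<and>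
       (\<lambda>n. h1norm \<Omega> (\<lambda>x. f n x - u x)) \<longlonglongrightarrow> 0)}"

definition Gnorm2 :: "'a::euclidean_space set \<Rightarrow> ('a \<Rightarrow> 'b::euclidean_space) \<Rightarrow> ('a \<Rightarrow> 'b) \<Rightarrow> real" where
  "Gnorm2 \<Omega> x y = 5/4 * gradnorm2 \<Omega> x - gradinner \<Omega> x y + 1/4 * gradnorm2 \<Omega> y"

text \<open>Inner product on H^1_D (on equivalence classes modulo a.e. equality).\<close>
definition inner_product_on :: "'a::euclidean_space set \<Rightarrow> ('a \<Rightarrow> 'b::euclidean_space) set \<Rightarrow>
    (('a \<Rightarrow> 'b) \<Rightarrow> ('a \<Rightarrow> 'b) \<Rightarrow> real) \<Rightarrow> bool" where
  "inner_product_on \<Omega> V ip \<longleftrightarrow>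
     (\<forall>u\<in>V. \<forall>v\<in>V. ip u v = ip v u) \<and>
     (\<forall>u\<in>V. \<forall>w\<in>V. \<forall>v\<in>V. ip (\<lambda>x. u x + w x) v = ip u v + ip w v) \<and>
     (\<forall>u\<in>V. \<forall>v\<in>V. \<forall>c. ip (\<lambda>x. c *\<^sub>R u x) v = c * ip u v) \<and>
     (\<forall>u\<in>V. \<forall>u'\<in>V. \<forall>v\<in>V. (AE x in lebesgue_on \<Omega>. u x = u' x) \<longrightarrow> ip u v = ip u' v) \<and>
     (\<forall>v\<in>V. 0 \<le> ip v v) \<and>
     (\<forall>v\<in>V. ip v v = 0 \<longrightarrow> (AE x in lebesgue_on \<Omega>. v x = 0))"

end

theory Submission
  imports Defs
begin


lemma fin_lebesgue_on:
  fixes \<Omega> :: "'a::euclidean_space set"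
  assumes "open \<Omega>" "bounded \<Omega>"
  shows "finite_measure (lebesgue_on \<Omega>)"
proof -
  have "\<Omega> \<in> lmeasurable" using assms by (simp add: bounded_set_imp_lmeasurable borel_open)
  then show ?thesis
  proof (intro finite_measureI)
    have "emeasure (lebesgue_on \<Omega>) (space (lebesgue_on \<Omega>)) = emeasure lebesgue \<Omega>"
      using \<open>\<Omega> \<in> lmeasurable\<close> by (subst emeasure_restrict_space) (auto simp: space_restrict_space)
    then show "emeasure (lebesgue_on \<Omega>) (space (lebesgue_on \<Omega>)) \<noteq> \<infinity>"
      using fmeasurableD2[OF \<open>\<Omega> \<in> lmeasurable\<close>] by simp
  qed
qed

lemma prod_le_sq: "(a::real) \<ge> 0 \<Longrightarrow> b \<ge> 0 \<Longrightarrow> a * b \<le> a\<^sup>2 + b\<^sup>2"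
proof -
  assume "a \<ge> 0" "b \<ge> 0"
  have "2*a*b \<le> a^2+b^2" by (rule sum_squares_bound)
  moreover have "0 \<le> a * b" using \<open>a \<ge> 0\<close> \<open>b \<ge> 0\<close> by simp
  ultimately show ?thesis by linarith
qed

lemma L2_integrable_inner:
  assumes "L2 \<Omega> f" "L2 \<Omega> g"
  shows "integrable (lebesgue_on \<Omega>) (\<lambda>x. f x \<bullet> g x)"
proof (rule Bochner_Integration.integrable_bound)
  show "integrable (lebesgue_on \<Omega>) (\<lambda>x. (norm (f x))\<^sup>2 + (norm (g x))\<^sup>2)"
    using assms unfolding L2_def by (intro Bochner_Integration.integrable_add) simp_all
  show "(\<lambda>x. f x \<bullet> g x) \<in> borel_measurable (lebesgue_on \<Omega>)"
    using assms unfolding L2_def by (intro borel_measurable_inner) simp_all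
  show "AE x in lebesgue_on \<Omega>. norm (f x \<bullet> g x) \<le> norm ((norm (f x))\<^sup>2 + (norm (g x))\<^sup>2)"
  proof (intro AE_I2)
    fix x
    have "\<bar>f x \<bullet> g x\<bar> \<le> norm (f x) * norm (g x)" by (rule Cauchy_Schwarz_ineq2)
    also have "\<dots> \<le> (norm (f x))\<^sup>2 + (norm (g x))\<^sup>2"
      by (rule prod_le_sq) simp_all
    finally show "norm (f x \<bullet> g x) \<le> norm ((norm (f x))\<^sup>2 + (norm (g x))\<^sup>2)" by simp
  qed
qed

lemma L2_integrable_scale:
  fixes \<Omega> :: "'a::euclidean_space set" and g :: "'a \<Rightarrow> 'b::euclidean_space"
  assumes "open \<Omega>" "bounded \<Omega>" "L2 \<Omega> g"
    and c: "c \<in> borel_measurable (lebesgue_on \<Omega>)" "\<And>x. \<bar>c x\<bar> \<le> B"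
  shows "integrable (lebesgue_on \<Omega>) (\<lambda>x. c x *\<^sub>R g x)"
proof -
  interpret finite_measure "lebesgue_on \<Omega>" using fin_lebesgue_on assms by blast
  show ?thesis
  proof (rule Bochner_Integration.integrable_bound)
    show "integrable (lebesgue_on \<Omega>) (\<lambda>x. B * (1 + (norm (g x))\<^sup>2))"
      using assms unfolding L2_def by (intro integrable_mult_right Bochner_Integration.integrable_add) simp_all
    show "(\<lambda>x. c x *\<^sub>R g x) \<in> borel_measurable (lebesgue_on \<Omega>)"
      using assms unfolding L2_def by (intro borel_measurable_scaleR) simp_all
    show "AE x in lebesgue_on \<Omega>. norm (c x *\<^sub>R g x) \<le> norm (B * (1 + (norm (g x))\<^sup>2))"
    proof (intro AE_I2)
      fix x
      have B: "0 \<le> B" using c(2)[of x] by simp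
      have "norm (g x) * 1 \<le> (norm (g x))\<^sup>2 + 1\<^sup>2"
        by (rule prod_le_sq) simp_all
      then have "\<bar>c x\<bar> * norm (g x) \<le> B * (1 + (norm (g x))\<^sup>2)"
        using c(2)[of x] B by (intro mult_mono) auto
      then show "norm (c x *\<^sub>R g x) \<le> norm (B * (1 + (norm (g x))\<^sup>2))"
        using B by simp
    qed
  qed
qed



lemma tsupp_zero: "x \<notin> tsupp \<phi> \<Longrightarrow> \<phi> x = 0"
  unfolding tsupp_def using closure_subset[of "{x. \<phi> x \<noteq> 0}"] by auto

lemma C1_cont: "C1_with \<phi> D \<Longrightarrow> continuous_on UNIV \<phi>"
  unfolding C1_with_def
  by (intro continuous_at_imp_continuous_on ballI) (auto intro: has_derivative_continuous)

lemma C1_D_zero: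
  assumes "C1_with \<phi> D" "x \<notin> tsupp \<phi>"
  shows "D x v = 0"
proof -
  have op: "open (- tsupp \<phi>)" unfolding tsupp_def by auto
  have "((\<lambda>_. 0) has_derivative (\<lambda>_. 0)) (at x)" by simp
  then have "(\<phi> has_derivative (\<lambda>_. 0)) (at x)"
    by (rule has_derivative_transform_within_open[OF _ op]) (use assms tsupp_zero in auto)
  moreover have "(\<phi> has_derivative D x) (at x)" using assms unfolding C1_with_def by auto
  ultimately have "D x = (\<lambda>_. 0)" using has_derivative_unique by blast
  then show ?thesis by simp
qed

lemma compact_sup_bounded:
  fixes f :: "'a::euclidean_space \<Rightarrow> 'b::real_normed_vector"
  assumes "continuous_on UNIV f" "compact K" "\<And>x. x \<notin> K \<Longrightarrow> f x = 0"
  shows "\<exists>B. \<forall>x. norm (f x) \<le> B"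
proof -
  have "continuous_on K f" using assms(1) by (rule continuous_on_subset) simp
  then have "compact (f ` K)" using assms(2) by (rule compact_continuous_image)
  then have "bounded (f ` K)" by (rule compact_imp_bounded)
  then obtain B where B: "\<forall>y\<in>f ` K. norm y \<le> B" unfolding bounded_iff by blast
  have "norm (f x) \<le> max B 0" for x
  proof (cases "x \<in> K")
    case True then show ?thesis using B by fastforce
  next
    case False then show ?thesis using assms(3)[of x] by simp
  qed
  then show ?thesis by blast
qed

lemma testfun_bounds:
  fixes \<phi> :: "'a::euclidean_space \<Rightarrow> real"
  assumes "C1_with \<phi> D" "compact (tsupp \<phi>)"
  shows "\<exists>B. \<forall>x. \<bar>\<phi> x\<bar> \<le> B" "\<exists>B. \<forall>x. \<bar>D x v\<bar> \<le> B"
proof -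
  have "\<exists>B. \<forall>x. norm (\<phi> x) \<le> B"
    by (rule compact_sup_bounded[OF C1_cont[OF assms(1)] assms(2)]) (rule tsupp_zero)
  then show "\<exists>B. \<forall>x. \<bar>\<phi> x\<bar> \<le> B" by simp
  have "continuous_on UNIV (\<lambda>x. D x v)" using assms(1) unfolding C1_with_def by auto
  from compact_sup_bounded[OF this assms(2)]
  show "\<exists>B. \<forall>x. \<bar>D x v\<bar> \<le> B"
    using C1_D_zero[OF assms(1)] by simp
qed

lemma testfun_meas:
  fixes \<phi> :: "'a::euclidean_space \<Rightarrow> real"
  assumes "C1_with \<phi> D" "open \<Omega>"
  shows "\<phi> \<in> borel_measurable (lebesgue_on \<Omega>)" "(\<lambda>x. D x v) \<in> borel_measurable (lebesgue_on \<Omega>)"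
proof -
  have S: "\<Omega> \<in> sets lebesgue" using assms by (simp add: borel_open)
  show "\<phi> \<in> borel_measurable (lebesgue_on \<Omega>)"
    using continuous_on_subset[OF C1_cont[OF assms(1)], of \<Omega>] S by (intro continuous_imp_measurable_on_sets_lebesgue) auto
  have "continuous_on UNIV (\<lambda>x. D x v)" using assms(1) unfolding C1_with_def by auto
  then have "continuous_on \<Omega> (\<lambda>x. D x v)" by (rule continuous_on_subset) simp
  then show "(\<lambda>x. D x v) \<in> borel_measurable (lebesgue_on \<Omega>)"
    using S by (rule continuous_imp_measurable_on_sets_lebesgue)
qed



lemma norm_add_sq_le: "(norm (a + b::'b::real_normed_vector))\<^sup>2 \<le> 2 * (norm a)\<^sup>2 + 2 * (norm b)\<^sup>2"
proof -
  have "(norm (a + b))\<^sup>2 \<le> (norm a + norm b)\<^sup>2"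
    by (rule power_mono) (simp_all add: norm_triangle_ineq)
  also have "\<dots> \<le> 2 * (norm a)\<^sup>2 + 2 * (norm b)\<^sup>2"
    using sum_squares_bound[of "norm a" "norm b"] by (simp add: power2_sum)
  finally show ?thesis .
qed

lemma L2_lin:
  fixes u w :: "'a::euclidean_space \<Rightarrow> 'b::euclidean_space"
  assumes "L2 \<Omega> u" "L2 \<Omega> w"
  shows "L2 \<Omega> (\<lambda>x. u x + c *\<^sub>R w x)"
  unfolding L2_def
proof
  show m: "(\<lambda>x. u x + c *\<^sub>R w x) \<in> borel_measurable (lebesgue_on \<Omega>)"
    using assms unfolding L2_def by (intro borel_measurable_add borel_measurable_scaleR) simp_all
  show "integrable (lebesgue_on \<Omega>) (\<lambda>x. (norm (u x + c *\<^sub>R w x))\<^sup>2)"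
  proof (rule Bochner_Integration.integrable_bound)
    show "integrable (lebesgue_on \<Omega>) (\<lambda>x. 2 * (norm (u x))\<^sup>2 + 2 * (c\<^sup>2 * (norm (w x))\<^sup>2))"
      using assms unfolding L2_def
      by (intro Bochner_Integration.integrable_add integrable_mult_right) simp_all
    show "(\<lambda>x. (norm (u x + c *\<^sub>R w x))\<^sup>2) \<in> borel_measurable (lebesgue_on \<Omega>)"
      using m by (intro borel_measurable_power borel_measurable_norm) simp_all
    show "AE x in lebesgue_on \<Omega>. norm ((norm (u x + c *\<^sub>R w x))\<^sup>2) \<le>
        norm (2 * (norm (u x))\<^sup>2 + 2 * (c\<^sup>2 * (norm (w x))\<^sup>2))"
    proof (intro AE_I2)
      fix x
      have "(norm (u x + c *\<^sub>R w x))\<^sup>2 \<le> 2 * (norm (u x))\<^sup>2 + 2 * (norm (c *\<^sub>R w x))\<^sup>2"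
        by (rule norm_add_sq_le)
      also have "(norm (c *\<^sub>R w x))\<^sup>2 = c\<^sup>2 * (norm (w x))\<^sup>2"
        by (simp add: power_mult_distrib)
      finally show "norm ((norm (u x + c *\<^sub>R w x))\<^sup>2) \<le>
        norm (2 * (norm (u x))\<^sup>2 + 2 * (c\<^sup>2 * (norm (w x))\<^sup>2))" by simp
    qed
  qed
qed

lemma weak_partial_lin:
  fixes u w g k :: "'a::euclidean_space \<Rightarrow> 'b::euclidean_space"
  assumes \<Omega>: "open \<Omega>" "bounded \<Omega>"
    and L: "L2 \<Omega> u" "L2 \<Omega> w" "L2 \<Omega> g" "L2 \<Omega> k"
    and wp: "weak_partial \<Omega> u b g" "weak_partial \<Omega> w b k"
  shows "weak_partial \<Omega> (\<lambda>x. u x + c *\<^sub>R w x) b (\<lambda>x. g x + c *\<^sub>R k x)"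
  unfolding weak_partial_def
proof (intro allI impI)
  fix \<phi> :: "'a \<Rightarrow> real" and D
  assume H: "C1_with \<phi> D \<and> compact (tsupp \<phi>) \<and> tsupp \<phi> \<subseteq> \<Omega>"
  obtain B1 where B1: "\<And>x. \<bar>\<phi> x\<bar> \<le> B1" using testfun_bounds(1)[where \<phi>=\<phi> and D=D] H by blast
  obtain B2 where B2: "\<And>x. \<bar>D x b\<bar> \<le> B2" using testfun_bounds(2)[where \<phi>=\<phi> and D=D and v=b] H by blast
  have m1: "\<phi> \<in> borel_measurable (lebesgue_on \<Omega>)" and m2: "(\<lambda>x. D x b) \<in> borel_measurable (lebesgue_on \<Omega>)"
    using testfun_meas(1)[where \<phi>=\<phi> and D=D and \<Omega>=\<Omega>] testfun_meas(2)[where \<phi>=\<phi> and D=D and \<Omega>=\<Omega> and v=b] H \<Omega> by auto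
  have iu: "integrable (lebesgue_on \<Omega>) (\<lambda>x. D x b *\<^sub>R u x)"
    by (rule L2_integrable_scale[OF \<Omega> L(1) m2 B2])
  have iw: "integrable (lebesgue_on \<Omega>) (\<lambda>x. D x b *\<^sub>R w x)"
    by (rule L2_integrable_scale[OF \<Omega> L(2) m2 B2])
  have ig: "integrable (lebesgue_on \<Omega>) (\<lambda>x. \<phi> x *\<^sub>R g x)"
    by (rule L2_integrable_scale[OF \<Omega> L(3) m1 B1])
  have ik: "integrable (lebesgue_on \<Omega>) (\<lambda>x. \<phi> x *\<^sub>R k x)"
    by (rule L2_integrable_scale[OF \<Omega> L(4) m1 B1])
  have eu: "integral\<^sup>L (lebesgue_on \<Omega>) (\<lambda>x. D x b *\<^sub>R u x) = - integral\<^sup>L (lebesgue_on \<Omega>) (\<lambda>x. \<phi> x *\<^sub>R g x)"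
    using wp(1) H unfolding weak_partial_def by blast
  have ew: "integral\<^sup>L (lebesgue_on \<Omega>) (\<lambda>x. D x b *\<^sub>R w x) = - integral\<^sup>L (lebesgue_on \<Omega>) (\<lambda>x. \<phi> x *\<^sub>R k x)"
    using wp(2) H unfolding weak_partial_def by blast
  have "integral\<^sup>L (lebesgue_on \<Omega>) (\<lambda>x. D x b *\<^sub>R (u x + c *\<^sub>R w x))
      = integral\<^sup>L (lebesgue_on \<Omega>) (\<lambda>x. D x b *\<^sub>R u x + c *\<^sub>R (D x b *\<^sub>R w x))"
    by (simp add: scaleR_add_right mult.commute)
  also have "\<dots> = integral\<^sup>L (lebesgue_on \<Omega>) (\<lambda>x. D x b *\<^sub>R u x) + c *\<^sub>R integral\<^sup>L (lebesgue_on \<Omega>) (\<lambda>x. D x b *\<^sub>R w x)"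
    using iu iw by (simp only: Bochner_Integration.integral_add integrable_scaleR_right integral_scaleR_right)
  also have "\<dots> = - (integral\<^sup>L (lebesgue_on \<Omega>) (\<lambda>x. \<phi> x *\<^sub>R g x) + c *\<^sub>R integral\<^sup>L (lebesgue_on \<Omega>) (\<lambda>x. \<phi> x *\<^sub>R k x))"
    using eu ew by (simp add: algebra_simps)
  also have "integral\<^sup>L (lebesgue_on \<Omega>) (\<lambda>x. \<phi> x *\<^sub>R g x) + c *\<^sub>R integral\<^sup>L (lebesgue_on \<Omega>) (\<lambda>x. \<phi> x *\<^sub>R k x)
      = integral\<^sup>L (lebesgue_on \<Omega>) (\<lambda>x. \<phi> x *\<^sub>R g x + c *\<^sub>R (\<phi> x *\<^sub>R k x))"
    using ig ik by (simp only: Bochner_Integration.integral_add integrable_scaleR_right integral_scaleR_right)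
  also have "\<dots> = integral\<^sup>L (lebesgue_on \<Omega>) (\<lambda>x. \<phi> x *\<^sub>R (g x + c *\<^sub>R k x))"
    by (simp add: scaleR_add_right mult.commute)
  finally show "integral\<^sup>L (lebesgue_on \<Omega>) (\<lambda>x. D x b *\<^sub>R (u x + c *\<^sub>R w x)) =
         - integral\<^sup>L (lebesgue_on \<Omega>) (\<lambda>x. \<phi> x *\<^sub>R (g x + c *\<^sub>R k x))" .
qed



definition qf :: "real \<Rightarrow> real" where "qf t = (if t \<le> 0 then 0 else t\<^sup>2)"
definition qd :: "real \<Rightarrow> real" where "qd t = 2 * max 0 t"

lemma qf_deriv: "(qf has_real_derivative qd t) (at t)"
proof (cases "t < 0")
  case True
  have "((\<lambda>_. 0) has_real_derivative qd t) (at t)" using True by (simp add: qd_def)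
  then show ?thesis
    by (rule has_field_derivative_transform_within_open[where S="{..<0}"]) (use True in \<open>auto simp: qf_def qd_def\<close>)
next
  case False
  show ?thesis
  proof (cases "t > 0")
    case True
    have "((\<lambda>x. x\<^sup>2) has_real_derivative qd t) (at t)"
      using True by (auto intro!: derivative_eq_intros simp: qd_def)
    then show ?thesis
      by (rule has_field_derivative_transform_within_open[where S="{0<..}"]) (use True in \<open>auto simp: qf_def qd_def\<close>)
  next
    case False2: False
    then have t: "t = 0" using False by simp
    have "((\<lambda>h. (qf (0 + h) - qf 0) / h) \<longlongrightarrow> 0) (at 0)"
    proof (rule Lim_null_comparison)
      show "\<forall>\<^sub>F x in at 0. norm ((qf (0 + x) - qf 0) / x) \<le> \<bar>x\<bar>"
        by (intro always_eventually allI) (auto simp: qf_def power2_eq_square abs_mult)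
      show "((\<lambda>x. \<bar>x\<bar>) \<longlongrightarrow> (0::real)) (at 0)"
        using tendsto_rabs[OF tendsto_ident_at[of "0::real" UNIV]] by simp
    qed
    then show ?thesis using t by (simp add: DERIV_def qd_def)
  qed
qed

definition ss :: "real \<Rightarrow> real" where "ss t = (qf t - 2 * qf (t - 1) + qf (t - 2)) / 2"
definition ssd :: "real \<Rightarrow> real" where "ssd t = (qd t - 2 * qd (t - 1) + qd (t - 2)) / 2"

lemma ss_deriv: "(ss has_real_derivative ssd t) (at t)"
proof -
  have a: "((\<lambda>t. qf (t - c)) has_real_derivative qd (t - c)) (at t)" for c
  proof -
    have "((\<lambda>t. qf (t - c)) has_real_derivative qd (t - c) * 1) (at t)"
      by (rule DERIV_chain2[OF qf_deriv]) (auto intro!: derivative_eq_intros)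
    then show ?thesis by simp
  qed
  show ?thesis
    unfolding ss_def[abs_def] ssd_def
    using a[of 0] a[of 1] a[of 2]
    by (auto intro!: derivative_eq_intros)
qed

lemma ssd_cont: "continuous_on S ssd"
  unfolding ssd_def qd_def by (intro continuous_intros) auto

lemma ss_cont: "continuous_on S ss"
  by (intro continuous_at_imp_continuous_on ballI DERIV_isCont[OF ss_deriv])

lemma ss_zero: "t \<le> 0 \<Longrightarrow> ss t = 0"
  by (simp add: ss_def qf_def)

lemma ss_one: "t \<ge> 2 \<Longrightarrow> ss t = 1"
  by (simp add: ss_def qf_def power2_eq_square algebra_simps)

lemma ss_pos: "t > 0 \<Longrightarrow> ss t > 0"
proof -
  assume t: "t > 0"
  consider "t \<le> 1" | "1 < t" "t \<le> 2" | "t > 2" by linarith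
  then show "ss t > 0"
  proof cases
    case 1 then show ?thesis using t by (simp add: ss_def qf_def)
  next
    case 2
    then have "ss t = (t\<^sup>2 - 2 * (t - 1)\<^sup>2) / 2" by (simp add: ss_def qf_def)
    also have "\<dots> = 1 - (2 - t)\<^sup>2 / 2" by (simp add: power2_eq_square field_simps)
    also have "\<dots> > 0"
    proof -
      have "(2 - t)\<^sup>2 < 1" using 2 by (simp add: abs_square_less_1)
      then show ?thesis by simp
    qed
    finally show ?thesis .
  next
    case 3 then show ?thesis by (simp add: ss_one)
  qed
qed

lemma ss_bounds: "0 \<le> ss t" "ss t \<le> 1"
proof -
  consider "t \<le> 0" | "0 < t" "t \<le> 1" | "1 < t" "t \<le> 2" | "t > 2" by linarith
  then have "0 \<le> ss t \<and> ss t \<le> 1"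
  proof cases
    case 1 then show ?thesis by (simp add: ss_zero)
  next
    case 2
    then have "ss t = t\<^sup>2 / 2" by (simp add: ss_def qf_def)
    moreover have "t\<^sup>2 \<le> 1" using 2 by (simp add: power_le_one)
    moreover have "0 \<le> t\<^sup>2" by simp
    ultimately show ?thesis by linarith
  next
    case 3
    then have "ss t = 1 - (2 - t)\<^sup>2 / 2" by (simp add: ss_def qf_def power2_eq_square field_simps)
    moreover have "(2 - t)\<^sup>2 \<le> 1" using 3 by (simp add: abs_square_le_1)
    moreover have "0 \<le> (2 - t)\<^sup>2" by simp
    ultimately show ?thesis by linarith
  next
    case 4 then show ?thesis by (simp add: ss_one)
  qed
  then show "0 \<le> ss t" "ss t \<le> 1" by auto
qed



lemma ss_has_derivative[derivative_intros]:
  "(g has_derivative g') (at x within s) \<Longrightarrow> ((\<lambda>x. ss (g x)) has_derivative (\<lambda>v. g' v * ssd (g x))) (at x within s)"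
  by (rule DERIV_compose_FDERIV[OF ss_deriv])

lemma ss_cont_comp[continuous_intros]: "continuous_on S f \<Longrightarrow> continuous_on S (\<lambda>x. ss (f x))"
  by (rule continuous_on_compose2[OF ss_cont[of UNIV]]) auto

lemma ssd_cont_comp[continuous_intros]: "continuous_on S f \<Longrightarrow> continuous_on S (\<lambda>x. ssd (f x))"
  by (rule continuous_on_compose2[OF ssd_cont[of UNIV]]) auto

definition psi :: "'a::euclidean_space \<Rightarrow> 'a \<Rightarrow> real \<Rightarrow> 'a \<Rightarrow> 'a \<Rightarrow> real" where
  "psi a b n i x = ss (n * (x \<bullet> i - a \<bullet> i)) * ss (n * (b \<bullet> i - x \<bullet> i))"

definition psid :: "'a::euclidean_space \<Rightarrow> 'a \<Rightarrow> real \<Rightarrow> 'a \<Rightarrow> 'a \<Rightarrow> 'a \<Rightarrow> real" where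
  "psid a b n i x v = ssd (n * (x \<bullet> i - a \<bullet> i)) * (n * (v \<bullet> i)) * ss (n * (b \<bullet> i - x \<bullet> i))
     - ss (n * (x \<bullet> i - a \<bullet> i)) * ssd (n * (b \<bullet> i - x \<bullet> i)) * (n * (v \<bullet> i))"

definition bump :: "'a::euclidean_space \<Rightarrow> 'a \<Rightarrow> real \<Rightarrow> 'a \<Rightarrow> real" where
  "bump a b n x = (\<Prod>i\<in>Basis. psi a b n i x)"

definition dbump :: "'a::euclidean_space \<Rightarrow> 'a \<Rightarrow> real \<Rightarrow> 'a \<Rightarrow> 'a \<Rightarrow> real" where
  "dbump a b n x v = (\<Sum>i\<in>Basis. psid a b n i x v * (\<Prod>j\<in>Basis - {i}. psi a b n j x))"

lemma psi_deriv: "(psi a b n i has_derivative psid a b n i x) (at x)"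
proof -
  have "((\<lambda>x. ss (n * (x \<bullet> i - a \<bullet> i)) * ss (n * (b \<bullet> i - x \<bullet> i))) has_derivative
     (\<lambda>v. ss (n * (x \<bullet> i - a \<bullet> i)) * ((n * (0 - v \<bullet> i)) * ssd (n * (b \<bullet> i - x \<bullet> i)))
        + ((n * (v \<bullet> i - 0)) * ssd (n * (x \<bullet> i - a \<bullet> i))) * ss (n * (b \<bullet> i - x \<bullet> i)))) (at x)"
    by (intro has_derivative_mult ss_has_derivative has_derivative_mult_right has_derivative_diff
        has_derivative_const has_derivative_inner_left has_derivative_ident)
  then show ?thesis
    unfolding psi_def[abs_def]
    by (rule has_derivative_eq_rhs) (simp add: psid_def fun_eq_iff algebra_simps)
qed

lemma bump_C1: "C1_with (bump a b n) (dbump a b n)"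
  unfolding C1_with_def
proof (intro conjI allI)
  fix x
  show "(bump a b n has_derivative dbump a b n x) (at x)"
    unfolding bump_def[abs_def] dbump_def[abs_def]
    by (rule has_derivative_prod) (rule psi_deriv)
next
  fix v
  show "continuous_on UNIV (\<lambda>x. dbump a b n x v)"
    unfolding dbump_def psid_def psi_def
    by (intro continuous_intros)
qed

lemma bump_nonzero: "n > 0 \<Longrightarrow> bump a b n x \<noteq> 0 \<Longrightarrow> x \<in> box a b"
proof -
  assume n: "n > 0" and nz: "bump a b n x \<noteq> 0"
  have "a \<bullet> i < x \<bullet> i \<and> x \<bullet> i < b \<bullet> i" if i: "i \<in> Basis" for i
  proof -
    have "psi a b n i x \<noteq> 0" using nz i unfolding bump_def by auto
    then have "ss (n * (x \<bullet> i - a \<bullet> i)) \<noteq> 0" "ss (n * (b \<bullet> i - x \<bullet> i)) \<noteq> 0"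
      unfolding psi_def by auto
    then have "n * (x \<bullet> i - a \<bullet> i) > 0" "n * (b \<bullet> i - x \<bullet> i) > 0"
      using ss_zero by (meson not_less)+
    then show ?thesis using n by (simp add: zero_less_mult_iff)
  qed
  then show ?thesis by (simp add: mem_box)
qed

lemma bump_bounds: "0 \<le> bump a b n x" "bump a b n x \<le> 1"
  unfolding bump_def psi_def
  by (auto intro!: prod_nonneg prod_le_1 mult_le_one simp: ss_bounds)

lemma bump_lim: "(\<lambda>k. bump a b (real (Suc k)) x) \<longlonglongrightarrow> indicator (box a b) x"
proof (cases "x \<in> box a b")
  case True
  then have pos: "\<forall>i\<in>Basis. x \<bullet> i - a \<bullet> i > 0 \<and> b \<bullet> i - x \<bullet> i > 0" by (simp add: mem_box)
  have ev: "\<forall>\<^sub>F k in sequentially. real (Suc k) * (x \<bullet> i - a \<bullet> i) \<ge> 2 \<and> real (Suc k) * (b \<bullet> i - x \<bullet> i) \<ge> 2"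
    if i: "i \<in> Basis" for i
  proof -
    obtain N1 :: nat where N1: "N1 > 2 / (x \<bullet> i - a \<bullet> i)" using reals_Archimedean2 by blast
    obtain N2 :: nat where N2: "N2 > 2 / (b \<bullet> i - x \<bullet> i)" using reals_Archimedean2 by blast
    show ?thesis
    proof (rule eventually_sequentiallyI[of "max N1 N2"])
      fix k assume k: "max N1 N2 \<le> k"
      have p1: "x \<bullet> i - a \<bullet> i > 0" and p2: "b \<bullet> i - x \<bullet> i > 0" using pos i by auto
      have "2 / (x \<bullet> i - a \<bullet> i) \<le> real (Suc k)" using N1 k by linarith
      then have 1: "2 \<le> real (Suc k) * (x \<bullet> i - a \<bullet> i)" using p1 by (simp add: divide_le_eq)
      have "2 / (b \<bullet> i - x \<bullet> i) \<le> real (Suc k)" using N2 k by linarith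
      then have 2: "2 \<le> real (Suc k) * (b \<bullet> i - x \<bullet> i)" using p2 by (simp add: divide_le_eq)
      show "real (Suc k) * (x \<bullet> i - a \<bullet> i) \<ge> 2 \<and> real (Suc k) * (b \<bullet> i - x \<bullet> i) \<ge> 2"
        using 1 2 by simp
    qed
  qed
  have "\<forall>\<^sub>F k in sequentially. \<forall>i\<in>Basis. real (Suc k) * (x \<bullet> i - a \<bullet> i) \<ge> 2 \<and> real (Suc k) * (b \<bullet> i - x \<bullet> i) \<ge> 2"
    using ev by (simp add: eventually_ball_finite)
  then have "\<forall>\<^sub>F k in sequentially. bump a b (real (Suc k)) x = 1"
    by eventually_elim (simp add: bump_def psi_def ss_one)
  then have "(\<lambda>k. bump a b (real (Suc k)) x) \<longlonglongrightarrow> 1"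
    by (rule tendsto_eventually)
  then show ?thesis using True by simp
next
  case False
  then have "bump a b (real (Suc k)) x = 0" for k
    using bump_nonzero[of "real (Suc k)" a b x] by auto
  then show ?thesis using False by simp
qed

lemma bump_tsupp:
  assumes "n > 0"
  shows "tsupp (bump a b n) \<subseteq> closure (box a b)" "compact (tsupp (bump a b n))"
proof -
  have "{x. bump a b n x \<noteq> 0} \<subseteq> box a b" using bump_nonzero[OF assms] by blast
  then show "tsupp (bump a b n) \<subseteq> closure (box a b)" unfolding tsupp_def by (rule closure_mono)
  moreover have "compact (closure (box a b))" by (simp add: compact_closure bounded_box)
  ultimately show "compact (tsupp (bump a b n))"
    unfolding tsupp_def using compact_Int_closed[OF _ closed_closure, of "closure (box a b)" "{x. bump a b n x \<noteq> 0}"]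
    by (simp add: Int_absorb1)
qed



lemma box_int_zero:
  fixes f :: "'a::euclidean_space \<Rightarrow> real"
  assumes \<Omega>: "open \<Omega>" and f: "integrable (lebesgue_on \<Omega>) f"
    and hyp: "\<And>\<phi> D. C1_with \<phi> D \<Longrightarrow> compact (tsupp \<phi>) \<Longrightarrow> tsupp \<phi> \<subseteq> \<Omega> \<Longrightarrow>
                 integral\<^sup>L (lebesgue_on \<Omega>) (\<lambda>x. \<phi> x * f x) = 0"
    and box: "closure (box a b) \<subseteq> \<Omega>"
  shows "integral\<^sup>L (lebesgue_on \<Omega>) (\<lambda>x. indicator (box a b) x * f x) = 0"
proof -
  let ?s = "\<lambda>k x. bump a b (real (Suc k)) x * f x"
  have fm: "f \<in> borel_measurable (lebesgue_on \<Omega>)" using f by (rule borel_measurable_integrable)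
  have bm: "bump a b (real (Suc k)) \<in> borel_measurable (lebesgue_on \<Omega>)" for k
    by (rule testfun_meas(1)[OF bump_C1 \<Omega>])
  have im: "indicator (box a b) \<in> borel_measurable (lebesgue_on \<Omega>)"
  proof -
    have "indicator (box a b) \<in> borel_measurable lebesgue"
      by (intro borel_measurable_indicator) (simp add: borel_open)
    then show ?thesis by (rule measurable_restrict_space1)
  qed
  have lim: "(\<lambda>k. integral\<^sup>L (lebesgue_on \<Omega>) (?s k)) \<longlonglongrightarrow> integral\<^sup>L (lebesgue_on \<Omega>) (\<lambda>x. indicator (box a b) x * f x)"
  proof (rule integral_dominated_convergence[where w="\<lambda>x. \<bar>f x\<bar>"])
    show "(\<lambda>x. indicator (box a b) x * f x) \<in> borel_measurable (lebesgue_on \<Omega>)"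
      using im fm by (rule borel_measurable_times)
    show "?s k \<in> borel_measurable (lebesgue_on \<Omega>)" for k
      using bm fm by (rule borel_measurable_times)
    show "integrable (lebesgue_on \<Omega>) (\<lambda>x. \<bar>f x\<bar>)" using f by (rule integrable_abs)
    show "AE x in lebesgue_on \<Omega>. (\<lambda>k. ?s k x) \<longlonglongrightarrow> indicator (box a b) x * f x"
      by (intro AE_I2 tendsto_mult_right bump_lim)
    show "AE x in lebesgue_on \<Omega>. norm (?s k x) \<le> \<bar>f x\<bar>" for k
    proof (intro AE_I2)
      fix x
      have "\<bar>bump a b (real (Suc k)) x\<bar> \<le> 1" using bump_bounds[of a b "real (Suc k)" x] by simp
      then have "\<bar>bump a b (real (Suc k)) x\<bar> * \<bar>f x\<bar> \<le> 1 * \<bar>f x\<bar>" by (intro mult_right_mono) auto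
      then show "norm (?s k x) \<le> \<bar>f x\<bar>" by (simp add: abs_mult)
    qed
  qed
  have "integral\<^sup>L (lebesgue_on \<Omega>) (?s k) = 0" for k
  proof (rule hyp[OF bump_C1])
    show "compact (tsupp (bump a b (real (Suc k))))" by (rule bump_tsupp(2)) simp
    show "tsupp (bump a b (real (Suc k))) \<subseteq> \<Omega>" using bump_tsupp(1)[of "real (Suc k)" a b] box by simp
  qed
  then have "(\<lambda>k. integral\<^sup>L (lebesgue_on \<Omega>) (?s k)) \<longlonglongrightarrow> 0" by simp
  with lim show ?thesis using LIMSEQ_unique by blast
qed



lemma dens_emeasure:
  fixes h :: "'a::euclidean_space \<Rightarrow> real"
  assumes h: "integrable lborel h" "\<And>x. 0 \<le> h x" and X: "X \<in> sets borel"
  shows "emeasure (density lborel (\<lambda>x. ennreal (h x))) X = ennreal (\<integral>x. indicator X x * h x \<partial>lborel)"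
proof -
  have hm: "h \<in> borel_measurable lborel" using h(1) by (rule borel_measurable_integrable)
  have "emeasure (density lborel (\<lambda>x. ennreal (h x))) X = (\<integral>\<^sup>+ x. ennreal (h x) * indicator X x \<partial>lborel)"
    using hm X by (intro emeasure_density) auto
  also have "\<dots> = (\<integral>\<^sup>+ x. ennreal (indicator X x * h x) \<partial>lborel)"
    by (intro nn_integral_cong) (simp split: split_indicator)
  also have "\<dots> = ennreal (\<integral>x. indicator X x * h x \<partial>lborel)"
  proof (rule nn_integral_eq_integral)
    show "integrable lborel (\<lambda>x. indicator X x * h x)"
      using integrable_mult_indicator[of X lborel h] X h(1) by simp
    show "AE x in lborel. 0 \<le> indicator X x * h x"
      using h(2) by (intro AE_I2) (simp split: split_indicator)
  qed
  finally show ?thesis .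
qed

lemma local_zero:
  fixes g :: "'a::euclidean_space \<Rightarrow> real"
  assumes g: "integrable lborel g"
    and hyp: "\<And>c d. (\<integral>x. indicator (box c d \<inter> B0) x * g x \<partial>lborel) = 0"
    and B0: "B0 \<in> sets borel"
  shows "AE x in lborel. x \<in> B0 \<longrightarrow> g x = 0"
proof -
  define hp where "hp x = indicator B0 x * max 0 (g x)" for x
  define hn where "hn x = indicator B0 x * max 0 (- g x)" for x
  have ihp: "integrable lborel hp" unfolding hp_def
    using integrable_mult_indicator[of B0 lborel "\<lambda>x. max 0 (g x)"] g B0 by simp
  have ihn: "integrable lborel hn" unfolding hn_def
    using integrable_mult_indicator[of B0 lborel "\<lambda>x. max 0 (- g x)"] g B0 by simp
  have php: "0 \<le> hp x" "0 \<le> hn x" for x unfolding hp_def hn_def by auto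
  have eqX: "emeasure (density lborel (\<lambda>x. ennreal (hp x))) X = emeasure (density lborel (\<lambda>x. ennreal (hn x))) X"
    if X: "X \<in> range (\<lambda>(a, b). box a b)" for X
  proof -
    obtain c d where Xcd: "X = box c d" using X by auto
    have Xs: "X \<in> sets borel" using Xcd by simp
    have i1: "integrable lborel (\<lambda>x. indicator X x * hp x)"
      using integrable_mult_indicator[OF _ ihp, of X] Xs by simp
    have i2: "integrable lborel (\<lambda>x. indicator X x * hn x)"
      using integrable_mult_indicator[OF _ ihn, of X] Xs by simp
    have "(\<integral>x. indicator X x * hp x \<partial>lborel) - (\<integral>x. indicator X x * hn x \<partial>lborel)
        = (\<integral>x. indicator X x * hp x - indicator X x * hn x \<partial>lborel)"
      using i1 i2 by simp
    also have "\<dots> = (\<integral>x. indicator (box c d \<inter> B0) x * g x \<partial>lborel)"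
      by (intro Bochner_Integration.integral_cong) (auto simp: hp_def hn_def Xcd split: split_indicator)
    also have "\<dots> = 0" by (rule hyp)
    finally show ?thesis
      using dens_emeasure[OF ihp php(1) Xs] dens_emeasure[OF ihn php(2) Xs] by simp
  qed
  have "density lborel (\<lambda>x. ennreal (hp x)) = density lborel (\<lambda>x. ennreal (hn x))"
  proof (rule measure_eqI_generator_eq[where E="range (\<lambda>(a, b). box a b)" and \<Omega>=UNIV
        and A="\<lambda>i. box (- (real i *\<^sub>R One)) (real i *\<^sub>R One)"])
    show "Int_stable (range (\<lambda>(a, b). box a b :: 'a set))"
      by (auto simp: Int_stable_def box_Int_box)
    show "range (\<lambda>(a, b). box a b :: 'a set) \<subseteq> Pow UNIV" by simp
    show "sets (density lborel (\<lambda>x. ennreal (hp x))) = sigma_sets UNIV (range (\<lambda>(a, b). box a b))"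
      by (simp add: borel_eq_box)
    show "sets (density lborel (\<lambda>x. ennreal (hn x))) = sigma_sets UNIV (range (\<lambda>(a, b). box a b))"
      by (simp add: borel_eq_box)
    show "range (\<lambda>i. box (- (real i *\<^sub>R One)) (real i *\<^sub>R One) :: 'a set) \<subseteq> range (\<lambda>(a, b). box a b)"
      by auto
    show "(\<Union>i. box (- (real i *\<^sub>R One)) (real i *\<^sub>R One) :: 'a set) = UNIV"
      by (rule UN_box_eq_UNIV)
    show "emeasure (density lborel (\<lambda>x. ennreal (hp x))) (box (- (real i *\<^sub>R One)) (real i *\<^sub>R One)) \<noteq> \<infinity>" for i
      by (subst dens_emeasure[OF ihp php(1)]) auto
  qed (rule eqX)
  then have "AE x in lborel. ennreal (hp x) = ennreal (hn x)"
  proof (subst (asm) finite_density_unique)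
    show "(\<lambda>x. ennreal (hp x)) \<in> borel_measurable lborel" "(\<lambda>x. ennreal (hn x)) \<in> borel_measurable lborel"
      using ihp ihn by (auto intro: measurable_compose[OF borel_measurable_integrable])
    show "integral\<^sup>N lborel (\<lambda>x. ennreal (hp x)) \<noteq> \<infinity>"
      using nn_integral_eq_integral[OF ihp] php by simp
  qed auto
  then show ?thesis
  proof (rule AE_mp, intro AE_I2 impI)
    fix x assume e: "ennreal (hp x) = ennreal (hn x)" and x: "x \<in> B0"
    then have "max 0 (g x) = max 0 (- g x)" using php[of x] by (simp add: hp_def hn_def)
    then show "g x = 0" by (simp add: max_def split: if_splits)
  qed
qed



lemma rat_box_cover:
  fixes \<Omega> :: "'a::euclidean_space set"
  assumes "open \<Omega>" "x \<in> \<Omega>"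
  shows "\<exists>p\<in>{p \<in> Basis \<rightarrow>\<^sub>E \<rat> \<times> \<rat>. closure (box (\<Sum>i\<in>Basis. fst (p i) *\<^sub>R i) (\<Sum>i\<in>Basis. snd (p i) *\<^sub>R i)) \<subseteq> \<Omega>}.
           x \<in> box (\<Sum>i\<in>Basis. fst (p i) *\<^sub>R i) (\<Sum>i\<in>Basis. snd (p i) *\<^sub>R i)"
proof -
  obtain e where e: "e > 0" "ball x e \<subseteq> \<Omega>" using assms openE by blast
  have "x \<in> ball x (e/2)" using e by simp
  also have "ball x (e/2) = (\<Union>p\<in>{p \<in> Basis \<rightarrow>\<^sub>E \<rat> \<times> \<rat>. box (\<Sum>i\<in>Basis. fst (p i) *\<^sub>R i) (\<Sum>i\<in>Basis. snd (p i) *\<^sub>R i) \<subseteq> ball x (e/2)}.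
        box (\<Sum>i\<in>Basis. fst (p i) *\<^sub>R i) (\<Sum>i\<in>Basis. snd (p i) *\<^sub>R i))"
    by (rule open_UNION_box) simp
  finally obtain p where p: "p \<in> Basis \<rightarrow>\<^sub>E \<rat> \<times> \<rat>"
      "box (\<Sum>i\<in>Basis. fst (p i) *\<^sub>R i) (\<Sum>i\<in>Basis. snd (p i) *\<^sub>R i) \<subseteq> ball x (e/2)"
      "x \<in> box (\<Sum>i\<in>Basis. fst (p i) *\<^sub>R i) (\<Sum>i\<in>Basis. snd (p i) *\<^sub>R i)"
    by auto
  have "closure (box (\<Sum>i\<in>Basis. fst (p i) *\<^sub>R i) (\<Sum>i\<in>Basis. snd (p i) *\<^sub>R i)) \<subseteq> closure (ball x (e/2))"
    using p(2) by (rule closure_mono)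
  also have "\<dots> = cball x (e/2)" using e by simp
  also have "\<dots> \<subseteq> ball x e" using e by (simp add: subset_eq)
  finally show ?thesis using p e by blast
qed

lemma fund_lemma_boxes:
  fixes f :: "'a::euclidean_space \<Rightarrow> real"
  assumes \<Omega>: "open \<Omega>" and f: "integrable (lebesgue_on \<Omega>) f"
    and hyp: "\<And>a b. closure (box a b) \<subseteq> \<Omega> \<Longrightarrow> integral\<^sup>L (lebesgue_on \<Omega>) (\<lambda>x. indicator (box a b) x * f x) = 0"
  shows "AE x in lebesgue_on \<Omega>. f x = 0"
proof -
  have \<Omega>s: "\<Omega> \<in> sets lebesgue" using \<Omega> by (simp add: borel_open)
  define F where "F x = indicator \<Omega> x * f x" for x
  have iF: "integrable lebesgue F"
    unfolding F_def using integrable_restrict_space[of \<Omega> lebesgue f] \<Omega>s f by simp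
  have intF: "integral\<^sup>L (lebesgue_on \<Omega>) (\<lambda>x. indicator X x * f x) = integral\<^sup>L lebesgue (\<lambda>x. indicator X x * F x)" for X
    using integral_restrict_space[of \<Omega> lebesgue "\<lambda>x. indicator X x * f x"] \<Omega>s
    by (simp add: F_def mult.left_commute)
  have "F \<in> borel_measurable (completion lborel)" using iF by (rule borel_measurable_integrable)
  then obtain g where gm: "g \<in> borel_measurable lborel" and Fg: "AE x in lborel. F x = g x"
    using completion_ex_borel_measurable_real by blast
  have gmc: "g \<in> borel_measurable lebesgue" using gm by (rule measurable_completion)
  have Fgc: "AE x in lebesgue. F x = g x" using Fg by (rule AE_completion)
  have "integrable lebesgue g"
    using integrable_cong_AE[OF borel_measurable_integrable[OF iF] gmc Fgc] iF by simp
  then have ig: "integrable lborel g" using integrable_completion[OF gm] by simp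
  have key: "(\<integral>x. indicator S x * g x \<partial>lborel) = integral\<^sup>L (lebesgue_on \<Omega>) (\<lambda>x. indicator S x * f x)"
    if S: "S \<in> sets borel" for S
  proof -
    have m: "(\<lambda>x. indicator S x * g x) \<in> borel_measurable lborel" using S gm by simp
    have "(\<integral>x. indicator S x * g x \<partial>lborel) = (\<integral>x. indicator S x * g x \<partial>lebesgue)"
      using integral_completion[OF m] by simp
    also have "\<dots> = (\<integral>x. indicator S x * F x \<partial>lebesgue)"
    proof (rule integral_cong_AE)
      show "(\<lambda>x. indicator S x * g x) \<in> borel_measurable lebesgue" using measurable_completion[OF m] by simp
      show "(\<lambda>x. indicator S x * F x) \<in> borel_measurable lebesgue"
      proof -
        have "indicator S \<in> borel_measurable lebesgue"
          using S by (intro measurable_completion borel_measurable_indicator) simp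
        then show ?thesis using borel_measurable_integrable[OF iF] by (rule borel_measurable_times)
      qed
      show "AE x in lebesgue. indicator S x * g x = indicator S x * F x"
        using Fgc by (rule AE_mp) (intro AE_I2, simp)
    qed
    also have "\<dots> = integral\<^sup>L (lebesgue_on \<Omega>) (\<lambda>x. indicator S x * f x)" using intF by simp
    finally show ?thesis .
  qed
  have loc: "AE x in lebesgue. x \<in> box a0 b0 \<longrightarrow> F x = 0" if cl: "closure (box a0 b0) \<subseteq> \<Omega>" for a0 b0
  proof -
    have "AE x in lborel. x \<in> box a0 b0 \<longrightarrow> g x = 0"
    proof (rule local_zero[OF ig])
      fix c d
      obtain c' d' where cd: "box c d \<inter> box a0 b0 = box c' d'"
        using box_Int_box[of c d a0 b0] by blast
      have "closure (box c' d') \<subseteq> \<Omega>"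
        using closure_mono[of "box c' d'" "box a0 b0"] cd cl by auto
      then show "(\<integral>x. indicator (box c d \<inter> box a0 b0) x * g x \<partial>lborel) = 0"
        using key[of "box c' d'"] hyp[of c' d'] cd by simp
    qed simp
    then have "AE x in lebesgue. x \<in> box a0 b0 \<longrightarrow> g x = 0" by (rule AE_completion)
    then show ?thesis using Fgc by (rule AE_mp[OF _ AE_mp]) (intro AE_I2, auto)
  qed
  define I where "I = {p \<in> Basis \<rightarrow>\<^sub>E \<rat> \<times> \<rat>. closure (box (\<Sum>i\<in>Basis. fst (p i) *\<^sub>R i) (\<Sum>i\<in>Basis. snd (p i) *\<^sub>R i)) \<subseteq> (\<Omega>::'a set)}"
  have cI: "countable I"
  proof -
    have "countable (Basis \<rightarrow>\<^sub>E (\<rat> \<times> \<rat>) :: ('a \<Rightarrow> real \<times> real) set)"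
      by (intro countable_PiE finite_Basis countable_SIGMA countable_rat)
    then show ?thesis unfolding I_def by (rule countable_subset[rotated]) auto
  qed
  have "AE x in lebesgue. \<forall>p\<in>I. x \<in> box (\<Sum>i\<in>Basis. fst (p i) *\<^sub>R i) (\<Sum>i\<in>Basis. snd (p i) *\<^sub>R i) \<longrightarrow> F x = 0"
    using cI by (rule AE_ball_countable'[rotated]) (rule loc, simp add: I_def)
  then have "AE x in lebesgue. x \<in> \<Omega> \<longrightarrow> f x = 0"
  proof (rule AE_mp, intro AE_I2 impI)
    fix x assume A: "\<forall>p\<in>I. x \<in> box (\<Sum>i\<in>Basis. fst (p i) *\<^sub>R i) (\<Sum>i\<in>Basis. snd (p i) *\<^sub>R i) \<longrightarrow> F x = 0"
      and x: "x \<in> \<Omega>"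
    then have "F x = 0" using rat_box_cover[OF \<Omega> x] unfolding I_def by blast
    then show "f x = 0" using x by (simp add: F_def)
  qed
  then show ?thesis using \<Omega>s by (subst AE_restrict_space_iff) auto
qed



lemma L2_integrable:
  fixes g :: "'a::euclidean_space \<Rightarrow> 'b::euclidean_space"
  assumes "open \<Omega>" "bounded \<Omega>" "L2 \<Omega> g"
  shows "integrable (lebesgue_on \<Omega>) g"
  using L2_integrable_scale[OF assms, of "\<lambda>_. 1" 1] by simp

lemma weak_partial_unique:
  fixes u g1 g2 :: "'a::euclidean_space \<Rightarrow> 'b::euclidean_space"
  assumes \<Omega>: "open \<Omega>" "bounded \<Omega>" and L: "L2 \<Omega> g1" "L2 \<Omega> g2"
    and wp: "weak_partial \<Omega> u b g1" "weak_partial \<Omega> u b g2"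
  shows "AE x in lebesgue_on \<Omega>. g1 x = g2 x"
proof -
  have comp: "AE x in lebesgue_on \<Omega>. (g1 x - g2 x) \<bullet> j = 0" if j: "j \<in> Basis" for j
  proof (rule fund_lemma_boxes[OF \<Omega>(1)])
    have i1: "integrable (lebesgue_on \<Omega>) g1" by (rule L2_integrable[OF \<Omega> L(1)])
    have i2: "integrable (lebesgue_on \<Omega>) g2" by (rule L2_integrable[OF \<Omega> L(2)])
    show "integrable (lebesgue_on \<Omega>) (\<lambda>x. (g1 x - g2 x) \<bullet> j)"
      using i1 i2 by (intro integrable_inner_left Bochner_Integration.integrable_diff)
    fix a b' :: 'a
    assume cl: "closure (box a b') \<subseteq> \<Omega>"
    show "integral\<^sup>L (lebesgue_on \<Omega>) (\<lambda>x. indicator (box a b') x * ((g1 x - g2 x) \<bullet> j)) = 0"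
    proof (rule box_int_zero[OF \<Omega>(1) _ _ cl])
      show "integrable (lebesgue_on \<Omega>) (\<lambda>x. (g1 x - g2 x) \<bullet> j)"
        using i1 i2 by (intro integrable_inner_left Bochner_Integration.integrable_diff)
      fix \<phi> :: "'a \<Rightarrow> real" and D
      assume H: "C1_with \<phi> D" "compact (tsupp \<phi>)" "tsupp \<phi> \<subseteq> \<Omega>"
      obtain B1 where B1: "\<And>x. \<bar>\<phi> x\<bar> \<le> B1" using testfun_bounds(1)[where \<phi>=\<phi> and D=D] H by blast
      have m1: "\<phi> \<in> borel_measurable (lebesgue_on \<Omega>)"
        using testfun_meas(1)[where \<phi>=\<phi> and D=D and \<Omega>=\<Omega>] H \<Omega> by auto
      have ig1: "integrable (lebesgue_on \<Omega>) (\<lambda>x. \<phi> x *\<^sub>R g1 x)"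
        by (rule L2_integrable_scale[OF \<Omega> L(1) m1 B1])
      have ig2: "integrable (lebesgue_on \<Omega>) (\<lambda>x. \<phi> x *\<^sub>R g2 x)"
        by (rule L2_integrable_scale[OF \<Omega> L(2) m1 B1])
      have e: "integral\<^sup>L (lebesgue_on \<Omega>) (\<lambda>x. \<phi> x *\<^sub>R g1 x) = integral\<^sup>L (lebesgue_on \<Omega>) (\<lambda>x. \<phi> x *\<^sub>R g2 x)"
      proof -
        have "integral\<^sup>L (lebesgue_on \<Omega>) (\<lambda>x. D x b *\<^sub>R u x) = - integral\<^sup>L (lebesgue_on \<Omega>) (\<lambda>x. \<phi> x *\<^sub>R g1 x)"
          by (rule wp(1)[unfolded weak_partial_def, rule_format]) (use H in simp)
        moreover have "integral\<^sup>L (lebesgue_on \<Omega>) (\<lambda>x. D x b *\<^sub>R u x) = - integral\<^sup>L (lebesgue_on \<Omega>) (\<lambda>x. \<phi> x *\<^sub>R g2 x)"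
          by (rule wp(2)[unfolded weak_partial_def, rule_format]) (use H in simp)
        ultimately show ?thesis by simp
      qed
      have "integral\<^sup>L (lebesgue_on \<Omega>) (\<lambda>x. \<phi> x * ((g1 x - g2 x) \<bullet> j))
          = integral\<^sup>L (lebesgue_on \<Omega>) (\<lambda>x. (\<phi> x *\<^sub>R g1 x - \<phi> x *\<^sub>R g2 x) \<bullet> j)"
        by (simp add: inner_diff_left algebra_simps)
      also have "\<dots> = (integral\<^sup>L (lebesgue_on \<Omega>) (\<lambda>x. \<phi> x *\<^sub>R g1 x - \<phi> x *\<^sub>R g2 x)) \<bullet> j"
        using ig1 ig2 by (intro integral_inner_left) auto
      also have "\<dots> = 0" using ig1 ig2 e by simp
      finally show "integral\<^sup>L (lebesgue_on \<Omega>) (\<lambda>x. \<phi> x * ((g1 x - g2 x) \<bullet> j)) = 0" .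
    qed
  qed
  have "AE x in lebesgue_on \<Omega>. \<forall>j\<in>Basis. (g1 x - g2 x) \<bullet> j = 0"
    by (rule AE_finite_allI[OF finite_Basis]) (rule comp)
  then show ?thesis
  proof (rule AE_mp, intro AE_I2 impI)
    fix x assume "\<forall>j\<in>Basis. (g1 x - g2 x) \<bullet> j = 0"
    then have "g1 x - g2 x = 0" by - (rule euclidean_eqI, simp)
    then show "g1 x = g2 x" by simp
  qed
qed



lemma l2inner_commute: "l2inner \<Omega> f g = l2inner \<Omega> g f"
  unfolding l2inner_def by (simp add: inner_commute)

lemma l2inner_lin_left:
  assumes "L2 \<Omega> f" "L2 \<Omega> g" "L2 \<Omega> v"
  shows "l2inner \<Omega> (\<lambda>x. f x + c *\<^sub>R g x) v = l2inner \<Omega> f v + c * l2inner \<Omega> g v"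
proof -
  have i1: "integrable (lebesgue_on \<Omega>) (\<lambda>x. f x \<bullet> v x)" by (rule L2_integrable_inner[OF assms(1,3)])
  have i2: "integrable (lebesgue_on \<Omega>) (\<lambda>x. g x \<bullet> v x)" by (rule L2_integrable_inner[OF assms(2,3)])
  have "l2inner \<Omega> (\<lambda>x. f x + c *\<^sub>R g x) v = integral\<^sup>L (lebesgue_on \<Omega>) (\<lambda>x. f x \<bullet> v x + c * (g x \<bullet> v x))"
    unfolding l2inner_def by (simp add: inner_add_left)
  also have "\<dots> = l2inner \<Omega> f v + c * l2inner \<Omega> g v"
    unfolding l2inner_def using i1 i2 by simp
  finally show ?thesis .
qed

lemma l2inner_cong_left:
  assumes "L2 \<Omega> f" "L2 \<Omega> f'" "L2 \<Omega> v" "AE x in lebesgue_on \<Omega>. f x = f' x"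
  shows "l2inner \<Omega> f v = l2inner \<Omega> f' v"
  unfolding l2inner_def
proof (rule integral_cong_AE)
  show "(\<lambda>x. f x \<bullet> v x) \<in> borel_measurable (lebesgue_on \<Omega>)"
    using assms unfolding L2_def by (intro borel_measurable_inner) simp_all
  show "(\<lambda>x. f' x \<bullet> v x) \<in> borel_measurable (lebesgue_on \<Omega>)"
    using assms unfolding L2_def by (intro borel_measurable_inner) simp_all
  show "AE x in lebesgue_on \<Omega>. f x \<bullet> v x = f' x \<bullet> v x"
    using assms(4) by (rule AE_mp) (intro AE_I2, simp)
qed

lemma l2inner_nonneg: "0 \<le> l2inner \<Omega> f f"
  unfolding l2inner_def by (rule integral_nonneg_AE) simp

lemma gradnorm2_nonneg: "0 \<le> gradnorm2 \<Omega> f"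
  unfolding gradnorm2_def gradinner_def by (intro sum_nonneg) (rule l2inner_nonneg)

lemma wgrad_spec:
  assumes "H1 \<Omega> u" "b \<in> Basis"
  shows "L2 \<Omega> (wgrad \<Omega> u b) \<and> weak_partial \<Omega> u b (wgrad \<Omega> u b)"
proof -
  have "\<exists>g. L2 \<Omega> g \<and> weak_partial \<Omega> u b g" using assms unfolding H1_def by blast
  then show ?thesis unfolding wgrad_def by (rule someI_ex)
qed



theorem proposition3p1:
  fixes \<Omega> \<Gamma>D :: "'a::euclidean_space set"
    and ip :: "('a \<Rightarrow> real^'l) \<Rightarrow> ('a \<Rightarrow> real^'l) \<Rightarrow> real"
    and cstar :: real
  assumes dom: "lipschitz_domain \<Omega>" and bdd: "bounded \<Omega>"
    and GD: "\<Gamma>D \<subseteq> frontier \<Omega>" and GDpos: "surface_measure \<Gamma>D > 0"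
    and ip: "inner_product_on \<Omega> (H1D \<Omega> \<Gamma>D) ip"
    and cstar: "0 \<le> cstar"
    and poinc: "\<forall>v\<in>H1D \<Omega> \<Gamma>D. l2norm \<Omega> v \<le> sqrt cstar * sqrt (ip v v)"
  shows "\<exists>cG>0. \<forall>(\<tau>::real) (u0::'a \<Rightarrow> real^'l) dtu1.
           \<tau> > 0 \<and> H1 \<Omega> u0 \<and> (AE x in lebesgue_on \<Omega>. (norm (u0 x))\<^sup>2 = 1) \<and>
           dtu1 \<in> H1D \<Omega> \<Gamma>D \<and> (AE x in lebesgue_on \<Omega>. dtu1 x \<bullet> u0 x = 0) \<and>
           (\<forall>v\<in>H1D \<Omega> \<Gamma>D. (AE x in lebesgue_on \<Omega>. v x \<bullet> u0 x = 0) \<longrightarrow>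
              ip dtu1 v + gradinner \<Omega> (\<lambda>x. u0 x + \<tau> *\<^sub>R dtu1 x) v = 0)
           \<longrightarrow>
           (let u1 = (\<lambda>x. u0 x + \<tau> *\<^sub>R dtu1 x) in
              Gnorm2 \<Omega> u1 u0 \<le> cG * gradnorm2 \<Omega> u0 \<and>
              \<tau> * ip dtu1 dtu1 \<le> 1/2 * gradnorm2 \<Omega> u0 \<and>
              integral\<^sup>L (lebesgue_on \<Omega>) (\<lambda>x. \<bar>(norm (u1 x))\<^sup>2 - 1\<bar>) = \<tau>\<^sup>2 * (l2norm \<Omega> dtu1)\<^sup>2)"
proof (intro exI[of _ "1/2"] conjI allI impI)
  have \<Omega>: "open \<Omega>" "bounded \<Omega>" using dom bdd unfolding lipschitz_domain_def by auto
  show "(0::real) < 1/2" by simp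
  fix \<tau> :: real and u0 :: "'a \<Rightarrow> real^'l" and d :: "'a \<Rightarrow> real^'l"
  assume H: "\<tau> > 0 \<and> H1 \<Omega> u0 \<and> (AE x in lebesgue_on \<Omega>. (norm (u0 x))\<^sup>2 = 1) \<and>
           d \<in> H1D \<Omega> \<Gamma>D \<and> (AE x in lebesgue_on \<Omega>. d x \<bullet> u0 x = 0) \<and>
           (\<forall>v\<in>H1D \<Omega> \<Gamma>D. (AE x in lebesgue_on \<Omega>. v x \<bullet> u0 x = 0) \<longrightarrow>
              ip d v + gradinner \<Omega> (\<lambda>x. u0 x + \<tau> *\<^sub>R d x) v = 0)"
  have tau: "\<tau> > 0" and u0H: "H1 \<Omega> u0" and u0n: "AE x in lebesgue_on \<Omega>. (norm (u0 x))\<^sup>2 = 1"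
    and dD: "d \<in> H1D \<Omega> \<Gamma>D" and dort: "AE x in lebesgue_on \<Omega>. d x \<bullet> u0 x = 0"
    using H by auto
  have eqn: "ip d d + gradinner \<Omega> (\<lambda>x. u0 x + \<tau> *\<^sub>R d x) d = 0"
    using H dD dort by blast
  have dH: "H1 \<Omega> d" using dD unfolding H1D_def by blast
  have ipnn: "0 \<le> ip d d" using ip dD unfolding inner_product_on_def by blast
  define u1 where "u1 = (\<lambda>x. u0 x + \<tau> *\<^sub>R d x)"
  have L0: "L2 \<Omega> u0" and Ld: "L2 \<Omega> d" using u0H dH unfolding H1_def by auto
  define g0 where "g0 b = wgrad \<Omega> u0 b" for b
  define gd where "gd b = wgrad \<Omega> d b" for b
  define g1 where "g1 b = wgrad \<Omega> u1 b" for b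
  define G where "G b = (\<lambda>x. g0 b x + \<tau> *\<^sub>R gd b x)" for b
  have s0: "L2 \<Omega> (g0 b)" "weak_partial \<Omega> u0 b (g0 b)" if "b \<in> Basis" for b
    using wgrad_spec[OF u0H that] unfolding g0_def by auto
  have sd: "L2 \<Omega> (gd b)" "weak_partial \<Omega> d b (gd b)" if "b \<in> Basis" for b
    using wgrad_spec[OF dH that] unfolding gd_def by auto
  have sG: "L2 \<Omega> (G b)" "weak_partial \<Omega> u1 b (G b)" if "b \<in> Basis" for b
    unfolding G_def u1_def using L2_lin[OF s0(1) sd(1)] weak_partial_lin[OF \<Omega> L0 Ld s0(1) sd(1) s0(2) sd(2)] that
    by auto
  have u1H: "H1 \<Omega> u1" unfolding H1_def
    using L2_lin[OF L0 Ld] sG unfolding u1_def by blast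
  have s1: "L2 \<Omega> (g1 b)" "weak_partial \<Omega> u1 b (g1 b)" if "b \<in> Basis" for b
    using wgrad_spec[OF u1H that] unfolding g1_def by auto
  have ae1: "AE x in lebesgue_on \<Omega>. g1 b x = G b x" if "b \<in> Basis" for b
    by (rule weak_partial_unique[OF \<Omega> s1(1)[OF that] sG(1)[OF that] s1(2)[OF that] sG(2)[OF that]])
  define A where "A b = l2inner \<Omega> (g0 b) (g0 b)" for b
  define X where "X b = l2inner \<Omega> (g0 b) (gd b)" for b
  define C where "C b = l2inner \<Omega> (gd b) (gd b)" for b
  have GG0: "l2inner \<Omega> (G b) (g0 b) = A b + \<tau> * X b" if b: "b \<in> Basis" for b
    unfolding G_def A_def X_def using l2inner_lin_left[OF s0(1)[OF b] sd(1)[OF b] s0(1)[OF b]]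
    by (simp add: l2inner_commute[of \<Omega> "gd b"])
  have GGd: "l2inner \<Omega> (G b) (gd b) = X b + \<tau> * C b" if b: "b \<in> Basis" for b
    unfolding G_def C_def X_def using l2inner_lin_left[OF s0(1)[OF b] sd(1)[OF b] sd(1)[OF b]]
    by simp
  have GGG: "l2inner \<Omega> (G b) (G b) = A b + 2 * \<tau> * X b + \<tau>\<^sup>2 * C b" if b: "b \<in> Basis" for b
  proof -
    have "l2inner \<Omega> (G b) (G b) = l2inner \<Omega> (g0 b) (G b) + \<tau> * l2inner \<Omega> (gd b) (G b)"
      using l2inner_lin_left[OF s0(1)[OF b] sd(1)[OF b] sG(1)[OF b], of \<tau>] by (simp add: G_def)
    also have "l2inner \<Omega> (g0 b) (G b) = l2inner \<Omega> (G b) (g0 b)" by (rule l2inner_commute)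
    also have "l2inner \<Omega> (gd b) (G b) = l2inner \<Omega> (G b) (gd b)" by (rule l2inner_commute)
    finally have "l2inner \<Omega> (G b) (G b) = l2inner \<Omega> (G b) (g0 b) + \<tau> * l2inner \<Omega> (G b) (gd b)" .
    then show ?thesis using GG0[OF b] GGd[OF b] by (simp add: power2_eq_square algebra_simps)
  qed
  have e1d: "l2inner \<Omega> (g1 b) (gd b) = X b + \<tau> * C b" if b: "b \<in> Basis" for b
    using l2inner_cong_left[OF s1(1)[OF b] sG(1)[OF b] sd(1)[OF b] ae1[OF b]] GGd[OF b] by simp
  have e10: "l2inner \<Omega> (g1 b) (g0 b) = A b + \<tau> * X b" if b: "b \<in> Basis" for b
    using l2inner_cong_left[OF s1(1)[OF b] sG(1)[OF b] s0(1)[OF b] ae1[OF b]] GG0[OF b] by simp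
  have e11: "l2inner \<Omega> (g1 b) (g1 b) = A b + 2 * \<tau> * X b + \<tau>\<^sup>2 * C b" if b: "b \<in> Basis" for b
  proof -
    have "l2inner \<Omega> (g1 b) (g1 b) = l2inner \<Omega> (G b) (g1 b)"
      by (rule l2inner_cong_left[OF s1(1)[OF b] sG(1)[OF b] s1(1)[OF b] ae1[OF b]])
    also have "\<dots> = l2inner \<Omega> (g1 b) (G b)" by (rule l2inner_commute)
    also have "\<dots> = l2inner \<Omega> (G b) (G b)"
      by (rule l2inner_cong_left[OF s1(1)[OF b] sG(1)[OF b] sG(1)[OF b] ae1[OF b]])
    finally show ?thesis using GGG[OF b] by simp
  qed
  define SA where "SA = (\<Sum>b\<in>Basis. A b)"
  define SX where "SX = (\<Sum>b\<in>Basis. X b)"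
  define SC where "SC = (\<Sum>b\<in>Basis. C b)"
  have n0: "gradnorm2 \<Omega> u0 = SA" unfolding gradnorm2_def gradinner_def SA_def A_def g0_def ..
  have nd: "gradnorm2 \<Omega> d = SC" unfolding gradnorm2_def gradinner_def SC_def C_def gd_def ..
  have i1d: "gradinner \<Omega> u1 d = SX + \<tau> * SC"
  proof -
    have "gradinner \<Omega> u1 d = (\<Sum>b\<in>Basis. X b + \<tau> * C b)"
      unfolding gradinner_def using e1d by (simp add: g1_def gd_def)
    then show ?thesis by (simp add: SX_def SC_def sum.distrib sum_distrib_left)
  qed
  have i10: "gradinner \<Omega> u1 u0 = SA + \<tau> * SX"
  proof -
    have "gradinner \<Omega> u1 u0 = (\<Sum>b\<in>Basis. A b + \<tau> * X b)"
      unfolding gradinner_def using e10 by (simp add: g1_def g0_def)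
    then show ?thesis by (simp add: SX_def SA_def sum.distrib sum_distrib_left)
  qed
  have n1: "gradnorm2 \<Omega> u1 = SA + 2 * \<tau> * SX + \<tau>\<^sup>2 * SC"
  proof -
    have "gradnorm2 \<Omega> u1 = (\<Sum>b\<in>Basis. A b + 2 * \<tau> * X b + \<tau>\<^sup>2 * C b)"
      unfolding gradnorm2_def gradinner_def using e11 by (simp add: g1_def)
    then show ?thesis by (simp add: SX_def SA_def SC_def sum.distrib sum_distrib_left)
  qed
  have SCnn: "0 \<le> SC" using gradnorm2_nonneg[of \<Omega> d] nd by simp
  have n1nn: "0 \<le> SA + 2 * \<tau> * SX + \<tau>\<^sup>2 * SC" using gradnorm2_nonneg[of \<Omega> u1] n1 by simp
  have eqn': "ip d d + SX + \<tau> * SC = 0" using eqn i1d unfolding u1_def by simp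
  have tX: "\<tau> * SX = - (\<tau> * ip d d) - \<tau>\<^sup>2 * SC"
  proof -
    have "\<tau> * (ip d d + SX + \<tau> * SC) = 0" using eqn' by simp
    then show ?thesis by (simp add: power2_eq_square algebra_simps)
  qed
  have tip: "0 \<le> \<tau> * ip d d" using tau ipnn by simp
  have tC: "0 \<le> \<tau>\<^sup>2 * SC" using SCnn by simp
  show "let u1 = (\<lambda>x. u0 x + \<tau> *\<^sub>R d x) in
          Gnorm2 \<Omega> u1 u0 \<le> 1/2 * gradnorm2 \<Omega> u0 \<and>
          \<tau> * ip d d \<le> 1/2 * gradnorm2 \<Omega> u0 \<and>
          integral\<^sup>L (lebesgue_on \<Omega>) (\<lambda>x. \<bar>(norm (u1 x))\<^sup>2 - 1\<bar>) = \<tau>\<^sup>2 * (l2norm \<Omega> d)\<^sup>2"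
    unfolding Let_def u1_def[symmetric]
  proof (intro conjI)
    have "Gnorm2 \<Omega> u1 u0 = 5/4 * (SA + 2 * \<tau> * SX + \<tau>\<^sup>2 * SC) - (SA + \<tau> * SX) + 1/4 * SA"
      unfolding Gnorm2_def n1 i10 n0 ..
    also have "\<dots> = SA / 2 + 3/2 * (\<tau> * SX) + 5/4 * (\<tau>\<^sup>2 * SC)" by (simp add: algebra_simps)
    finally show "Gnorm2 \<Omega> u1 u0 \<le> 1/2 * gradnorm2 \<Omega> u0"
      unfolding n0 using tX tip tC by linarith
  next
    have "0 \<le> SA + 2 * (\<tau> * SX) + \<tau>\<^sup>2 * SC" using n1nn by (simp add: algebra_simps)
    then show "\<tau> * ip d d \<le> 1/2 * gradnorm2 \<Omega> u0"
      unfolding n0 using tX tip tC by linarith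
  next
    have pw: "AE x in lebesgue_on \<Omega>. \<bar>(norm (u1 x))\<^sup>2 - 1\<bar> = \<tau>\<^sup>2 * (d x \<bullet> d x)"
      using u0n dort
    proof (rule AE_mp[OF _ AE_mp], intro AE_I2 impI)
      fix x assume n: "(norm (u0 x))\<^sup>2 = 1" and o: "d x \<bullet> u0 x = 0"
      have "(norm (u1 x))\<^sup>2 = (u0 x + \<tau> *\<^sub>R d x) \<bullet> (u0 x + \<tau> *\<^sub>R d x)"
        unfolding u1_def by (simp add: power2_norm_eq_inner)
      also have "\<dots> = u0 x \<bullet> u0 x + 2 * \<tau> * (d x \<bullet> u0 x) + \<tau>\<^sup>2 * (d x \<bullet> d x)"
        by (simp add: inner_add_left inner_add_right inner_commute power2_eq_square algebra_simps)
      also have "u0 x \<bullet> u0 x = 1" using n by (simp add: power2_norm_eq_inner)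
      finally have "(norm (u1 x))\<^sup>2 - 1 = \<tau>\<^sup>2 * (d x \<bullet> d x)" using o by simp
      then show "\<bar>(norm (u1 x))\<^sup>2 - 1\<bar> = \<tau>\<^sup>2 * (d x \<bullet> d x)" by simp
    qed
    have mu0: "u0 \<in> borel_measurable (lebesgue_on \<Omega>)" and md: "d \<in> borel_measurable (lebesgue_on \<Omega>)"
      using L0 Ld unfolding L2_def by auto
    have "integral\<^sup>L (lebesgue_on \<Omega>) (\<lambda>x. \<bar>(norm (u1 x))\<^sup>2 - 1\<bar>) = integral\<^sup>L (lebesgue_on \<Omega>) (\<lambda>x. \<tau>\<^sup>2 * (d x \<bullet> d x))"
    proof (rule integral_cong_AE)
      show "(\<lambda>x. \<bar>(norm (u1 x))\<^sup>2 - 1\<bar>) \<in> borel_measurable (lebesgue_on \<Omega>)"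
        unfolding u1_def using mu0 md by measurable
      show "(\<lambda>x. \<tau>\<^sup>2 * (d x \<bullet> d x)) \<in> borel_measurable (lebesgue_on \<Omega>)"
        using md by measurable
    qed (rule pw)
    also have "\<dots> = \<tau>\<^sup>2 * l2inner \<Omega> d d" unfolding l2inner_def by simp
    also have "l2inner \<Omega> d d = (l2norm \<Omega> d)\<^sup>2" unfolding l2norm_def using l2inner_nonneg[of \<Omega> d] by simp
    finally show "integral\<^sup>L (lebesgue_on \<Omega>) (\<lambda>x. \<bar>(norm (u1 x))\<^sup>2 - 1\<bar>) = \<tau>\<^sup>2 * (l2norm \<Omega> d)\<^sup>2" .
  qed
qed


end
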